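(* For every set of formulas $\Gamma$ and every formula $\alpha$: if $\Gamma\vDash_{\mathcal{M}_1^1}\alpha$ then $\Gamma\vdash_{L_1^1}\alpha$.
   Context: Formulas are built from a countable set of propositional variables using unary $\neg,\circ$ and binary $\land,\lor,\to$; $\circ^0\alpha=\alpha$, $\circ^{m+1}\alpha=\circ(\circ^m\alpha)$. mbC is the Hilbert calculus with the axiom schemas of a standard axiomatization of positive classical propositional logic in $\land,\lor,\to$, plus (TND) $\alpha\lor\neg\alpha$ and (bc1) $\circ\alpha\to(\alpha\to(\neg\alpha\to\beta))$, with modus ponens as only rule; mbCciw is mbC plus (ciw) $\circ\alpha\lor(\alpha\land\neg\alpha)$; $L_1^0$ is mbCciw plus $\circ\circ\circ\alpha$; $L_1^1$ is $L_1^0$ plus (cf) $\neg\neg\alpha\to\alpha$ and (ce) $\alpha\to\neg\neg\alpha$. $\Gamma\vdash_L\alpha$ means derivability in $L$. Semantics: with Boolean operations $\land,\lor,\to,\sim$ on $\{0,1\}$, let $\mathbb{B}_1^0=\{x\in\{0,1\}^3: x_1\lor x_2=1,\ x_3\lor\sim(x_1\land x_2)=1\}$. The multialgebra $\mathcal{B}_1^1$ on $\mathbb{B}_1^0$ has $x\# y=\{z\in\mathbb{B}_1^0: z_1=x_1\# y_1\}$ for $\#\in\{\land,\lor,\to\}$, $\neg x=\{z\in\mathbb{B}_1^0: z_1=x_2 \text{ and } z_2=x_1\}$, $\circ x=\{(\sim(x_1\land x_2),x_3,x_3\land\sim(x_1\land x_2))\}$. $D_1^0=\{x:x_1=1\}$,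 $\mathcal{M}_1^1=(\mathcal{B}_1^1,D_1^0)$. Valuations over $\mathcal{M}_1^1$ are maps $h$ from formulas to $\mathbb{B}_1^0$ with $h(\alpha\#\beta)\in h(\alpha)\#h(\beta)$, $h(\neg\alpha)\in\neg h(\alpha)$, $h(\circ\alpha)\in\circ h(\alpha)$; $\Gamma\vDash_{\mathcal{M}_1^1}\alpha$ iff every valuation $h$ with $h[\Gamma]\subseteq D_1^0$ has $h(\alpha)\in D_1^0$. *)

theory Defs
  imports Main
begin

datatype fm =
    Var nat
  | Neg fm
  | Circ fm
  | Conj fm fm
  | Disj fm fm
  | Imp fm fm

primrec circ_pow :: "nat \<Rightarrow> fm \<Rightarrow> fm" where
  "circ_pow 0 a = a"
| "circ_pow (Suc m) a = Circ (circ_pow m a)"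

text \<open>Axioms of positive classical logic (Ax1--Ax9 of the standard
 axiomatization used for mbC), TND, bc1, ciw, the schema circ circ circ a,
 cf and ce.\<close>

inductive_set L11_axioms :: "fm set" where
  Ax1: "Imp a (Imp b a) \<in> L11_axioms"
| Ax2: "Imp (Imp a b) (Imp (Imp a (Imp b c)) (Imp a c)) \<in> L11_axioms"
| Ax3: "Imp a (Imp b (Conj a b)) \<in> L11_axioms"
| Ax4: "Imp (Conj a b) a \<in> L11_axioms"
| Ax5: "Imp (Conj a b) b \<in> L11_axioms"
| Ax6: "Imp a (Disj a b) \<in> L11_axioms"
| Ax7: "Imp b (Disj a b) \<in> L11_axioms"
| Ax8: "Imp (Imp a c) (Imp (Imp b c) (Imp (Disj a b) c)) \<in> L11_axioms"
| Ax9: "Disj a (Imp a b) \<in> L11_axioms"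
| TND: "Disj a (Neg a) \<in> L11_axioms"
| bc1: "Imp (Circ a) (Imp a (Imp (Neg a) b)) \<in> L11_axioms"
| ciw: "Disj (Circ a) (Conj a (Neg a)) \<in> L11_axioms"
| circ3: "circ_pow 3 a \<in> L11_axioms"
| cf: "Imp (Neg (Neg a)) a \<in> L11_axioms"
| ce: "Imp a (Neg (Neg a)) \<in> L11_axioms"

inductive L11_derivable :: "fm set \<Rightarrow> fm \<Rightarrow> bool" where
  hyp: "a \<in> \<Gamma> \<Longrightarrow> L11_derivable \<Gamma> a"
| ax: "a \<in> L11_axioms \<Longrightarrow> L11_derivable \<Gamma> a"
| mp: "L11_derivable \<Gamma> a \<Longrightarrow> L11_derivable \<Gamma> (Imp a b) \<Longrightarrow> L11_derivable \<Gamma> b"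

type_synonym tv = "bool \<times> bool \<times> bool"

definition B10 :: "tv set" where
  "B10 = {(x1, x2, x3). (x1 \<or> x2) \<and> (x3 \<or> \<not> (x1 \<and> x2))}"

definition D10 :: "tv set" where
  "D10 = {x \<in> B10. fst x}"

definition mconj :: "tv \<Rightarrow> tv \<Rightarrow> tv set" where
  "mconj x y = {z \<in> B10. fst z = (fst x \<and> fst y)}"
definition mdisj :: "tv \<Rightarrow> tv \<Rightarrow> tv set" where
  "mdisj x y = {z \<in> B10. fst z = (fst x \<or> fst y)}"
definition mimp :: "tv \<Rightarrow> tv \<Rightarrow> tv set" where
  "mimp x y = {z \<in> B10. fst z = (fst x \<longrightarrow> fst y)}"
definition mneg :: "tv \<Rightarrow> tv set" where
  "mneg x = {z \<in> B10. fst z = fst (snd x) \<and> fst (snd z) = fst x}"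
definition mcirc :: "tv \<Rightarrow> tv set" where
  "mcirc x = (case x of (x1, x2, x3) \<Rightarrow>
      {(\<not> (x1 \<and> x2), x3, x3 \<and> \<not> (x1 \<and> x2))})"

definition valuation :: "(fm \<Rightarrow> tv) \<Rightarrow> bool" where
  "valuation h \<longleftrightarrow>
     (\<forall>a. h a \<in> B10) \<and>
     (\<forall>a b. h (Conj a b) \<in> mconj (h a) (h b)) \<and>
     (\<forall>a b. h (Disj a b) \<in> mdisj (h a) (h b)) \<and>
     (\<forall>a b. h (Imp a b) \<in> mimp (h a) (h b)) \<and>
     (\<forall>a. h (Neg a) \<in> mneg (h a)) \<and>
     (\<forall>a. h (Circ a) \<in> mcirc (h a))"

definition M11_consequence :: "fm set \<Rightarrow> fm \<Rightarrow> bool" where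
  "M11_consequence \<Gamma> a \<longleftrightarrow>
     (\<forall>h. valuation h \<longrightarrow> h ` \<Gamma> \<subseteq> D10 \<longrightarrow> h a \<in> D10)"

end

theory Submission
  imports Defs
begin

abbreviation der where "der \<equiv> L11_derivable"

lemma der_mono: "der G a \<Longrightarrow> G \<subseteq> G' \<Longrightarrow> der G' a"
  by (induction rule: L11_derivable.induct) (auto intro: L11_derivable.intros)

lemma der_compact: "der G a \<Longrightarrow> \<exists>S. finite S \<and> S \<subseteq> G \<and> der S a"
proof (induction rule: L11_derivable.induct)
  case (hyp a G)
  then show ?case by (intro exI[of _ "{a}"]) (auto intro: L11_derivable.intros)
next
  case (ax a G)
  then show ?case by (intro exI[of _ "{}"]) (auto intro: L11_derivable.intros)
next
  case (mp G a b)
  then obtain S1 S2 where "finite S1" "S1 \<subseteq> G" "der S1 a" "finite S2" "S2 \<subseteq> G" "der S2 (Imp a b)"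
    by blast
  then show ?case
    by (intro exI[of _ "S1 \<union> S2"]) (auto intro: L11_derivable.mp der_mono)
qed

lemma axd: "a \<in> L11_axioms \<Longrightarrow> der G a" by (rule L11_derivable.ax)

lemma mp2: "der G (Imp a b) \<Longrightarrow> der G a \<Longrightarrow> der G b"
  using L11_derivable.mp by blast

lemma der_id: "der G (Imp a a)"
proof -
  have 1: "der G (Imp a (Imp a a))" by (rule axd, rule Ax1)
  have 2: "der G (Imp a (Imp (Imp a a) a))" by (rule axd, rule Ax1)
  have 3: "der G (Imp (Imp a (Imp a a)) (Imp (Imp a (Imp (Imp a a) a)) (Imp a a)))"
    by (rule axd, rule Ax2)
  show ?thesis using mp2[OF mp2[OF 3 1] 2] .
qed

lemma deduction0: "der H b \<Longrightarrow> H = insert a G \<Longrightarrow> der G (Imp a b)"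
proof (induction rule: L11_derivable.induct)
  case (hyp b H)
  then have "b = a \<or> b \<in> G" by blast
  then show ?case
  proof
    assume "b = a" then show ?thesis using der_id by simp
  next
    assume "b \<in> G"
    then show ?thesis using mp2[OF axd[OF Ax1] L11_derivable.hyp] by blast
  qed
next
  case (ax b H)
  then show ?case using mp2[OF axd[OF Ax1] axd] by blast
next
  case (mp H c b)
  have i1: "der G (Imp a c)" using mp by blast
  have i2: "der G (Imp a (Imp c b))" using mp by blast
  have 3: "der G (Imp (Imp a c) (Imp (Imp a (Imp c b)) (Imp a b)))" by (rule axd, rule Ax2)
  show ?case using mp2[OF mp2[OF 3 i1] i2] .
qed

lemma deduction: "der (insert a G) b \<Longrightarrow> der G (Imp a b)"
  using deduction0 by blast

locale maxi =
  fixes D :: "fm set" and \<alpha> :: fm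
  assumes nder: "\<not> der D \<alpha>"
    and maxl: "\<And>b. b \<notin> D \<Longrightarrow> der (insert b D) \<alpha>"
begin

lemma notin_imp: "b \<notin> D \<Longrightarrow> der D (Imp b \<alpha>)"
  using maxl deduction by blast

lemma closed: "der D b \<Longrightarrow> b \<in> D"
  using notin_imp mp2 nder by blast

lemma hypD: "b \<in> D \<Longrightarrow> der D b" by (rule L11_derivable.hyp)

lemma axin: "b \<in> L11_axioms \<Longrightarrow> b \<in> D" using closed axd by blast

lemma mpin: "Imp a b \<in> D \<Longrightarrow> a \<in> D \<Longrightarrow> b \<in> D"
  using closed hypD mp2 by blast

lemma conj_iff: "Conj a b \<in> D \<longleftrightarrow> a \<in> D \<and> b \<in> D"
  using mpin axin[OF Ax3] axin[OF Ax4] axin[OF Ax5] by blast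

lemma disj_iff: "Disj a b \<in> D \<longleftrightarrow> a \<in> D \<or> b \<in> D"
proof
  assume d: "Disj a b \<in> D"
  show "a \<in> D \<or> b \<in> D"
  proof (rule ccontr)
    assume "\<not> (a \<in> D \<or> b \<in> D)"
    then have "der D (Imp a \<alpha>)" "der D (Imp b \<alpha>)" using notin_imp by auto
    then have "der D \<alpha>"
      using mp2[OF mp2[OF mp2[OF axd[OF Ax8]]]] hypD[OF d] by blast
    then show False using nder by blast
  qed
next
  assume "a \<in> D \<or> b \<in> D"
  then show "Disj a b \<in> D" using mpin axin[OF Ax6] axin[OF Ax7] by blast
qed

lemma imp_iff: "Imp a b \<in> D \<longleftrightarrow> (a \<in> D \<longrightarrow> b \<in> D)"
proof
  assume "Imp a b \<in> D" then show "a \<in> D \<longrightarrow> b \<in> D" using mpin by blast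
next
  assume h: "a \<in> D \<longrightarrow> b \<in> D"
  show "Imp a b \<in> D"
  proof (cases "a \<in> D")
    case True then show ?thesis using h mpin axin[OF Ax1] by blast
  next
    case False then show ?thesis using disj_iff axin[OF Ax9, of a b] by blast
  qed
qed

lemma negneg: "Neg (Neg a) \<in> D \<longleftrightarrow> a \<in> D"
  using mpin axin[OF cf] axin[OF ce] by blast

lemma tnd: "a \<in> D \<or> Neg a \<in> D"
  using disj_iff axin[OF TND] by blast

lemma bc: "Circ a \<in> D \<Longrightarrow> a \<in> D \<Longrightarrow> Neg a \<in> D \<Longrightarrow> False"
  using mpin axin[OF bc1, of a \<alpha>] nder hypD by blast

lemma ciwD: "Circ a \<in> D \<or> (a \<in> D \<and> Neg a \<in> D)"
  using disj_iff conj_iff axin[OF ciw] by blast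

lemma c3: "Circ (Circ (Circ a)) \<in> D"
  using axin[OF circ3, of a] by (simp add: numeral_eq_Suc)

lemma circ_iff: "Circ a \<in> D \<longleftrightarrow> \<not> (a \<in> D \<and> Neg a \<in> D)"
  using bc ciwD by blast

definition h :: "fm \<Rightarrow> tv" where
  "h b = (b \<in> D, Neg b \<in> D, Neg (Circ b) \<in> D)"

lemma valid: "valuation h"
proof -
  have B: "h b \<in> B10" for b
    using tnd[of b] tnd[of "Circ b"] circ_iff[of b] by (auto simp: B10_def h_def)
  have cc: "Neg (Circ (Circ b)) \<in> D \<longleftrightarrow> (Neg (Circ b) \<in> D \<and> Circ b \<in> D)" for b
    using circ_iff[of "Circ b"] circ_iff[of "Circ (Circ b)"] c3[of b] tnd[of "Circ (Circ b)"]
    by blast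
  have N: "h (Neg b) \<in> mneg (h b)" for b
    using B[of "Neg b"] by (simp add: mneg_def h_def negneg)
  have Ci: "h (Circ b) \<in> mcirc (h b)" for b
    unfolding mcirc_def h_def using cc[of b] circ_iff[of b] by auto
  have Cj: "h (Conj a b) \<in> mconj (h a) (h b)" for a b
    using B[of "Conj a b"] by (simp add: mconj_def h_def conj_iff)
  have Dj: "h (Disj a b) \<in> mdisj (h a) (h b)" for a b
    using B[of "Disj a b"] by (simp add: mdisj_def h_def disj_iff)
  have Im: "h (Imp a b) \<in> mimp (h a) (h b)" for a b
    using B[of "Imp a b"] by (simp add: mimp_def h_def imp_iff)
  show ?thesis unfolding valuation_def using B N Ci Cj Dj Im by blast
qed

end

theorem theorem9:
  fixes \<Gamma> :: "fm set" and \<alpha> :: fm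
  assumes "M11_consequence \<Gamma> \<alpha>"
  shows "L11_derivable \<Gamma> \<alpha>"
proof (rule ccontr)
  assume nd: "\<not> der \<Gamma> \<alpha>"
  define A where "A = {D. \<Gamma> \<subseteq> D \<and> \<not> der D \<alpha>}"
  have inA: "X \<in> A \<longleftrightarrow> \<Gamma> \<subseteq> X \<and> \<not> der X \<alpha>" for X unfolding A_def by simp
  have "\<exists>M\<in>A. \<forall>X\<in>A. M \<subseteq> X \<longrightarrow> X = M"
  proof (rule Zorn_Lemma2, intro ballI)
    fix C assume C: "C \<in> chains A"
    have CA: "C \<subseteq> A" using chainsD2[OF C] .
    show "\<exists>U\<in>A. \<forall>X\<in>C. X \<subseteq> U"
    proof (cases "C = {}")
      case True then show ?thesis using nd inA by auto
    next
      case False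
      then obtain X0 where X0: "X0 \<in> C" by blast
      have "\<not> der (\<Union>C) \<alpha>"
      proof
        assume "der (\<Union>C) \<alpha>"
        then obtain S where S: "finite S" "S \<subseteq> \<Union>C" "der S \<alpha>" using der_compact by blast
        have "subset.chain A C" using C by (simp add: chains_alt_def)
        then obtain B where B: "B \<in> C" "S \<subseteq> B"
          using finite_subset_Union_chain[OF S(1) S(2) False] by blast
        have "B \<in> A" using B(1) CA by (rule subsetD[rotated])
        then have "\<not> der B \<alpha>" using inA by blast
        moreover have "der B \<alpha>" using der_mono[OF S(3) B(2)] .
        ultimately show False by contradiction
      qed
      moreover have "\<Gamma> \<subseteq> X0" using X0 CA inA by blast
      then have "\<Gamma> \<subseteq> \<Union>C" using X0 by blast
      ultimately have "\<Union>C \<in> A" using inA by blast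
      then show ?thesis by blast
    qed
  qed
  then obtain D where DA: "D \<in> A" and mx: "\<And>X. X \<in> A \<Longrightarrow> D \<subseteq> X \<Longrightarrow> X = D"
    by blast
  have D1: "\<Gamma> \<subseteq> D" and D2: "\<not> der D \<alpha>" using DA inA by auto
  interpret maxi D \<alpha>
  proof
    show "\<not> der D \<alpha>" by (rule D2)
    fix b assume b: "b \<notin> D"
    show "der (insert b D) \<alpha>"
    proof (rule ccontr)
      assume "\<not> der (insert b D) \<alpha>"
      then have "insert b D \<in> A" using D1 inA by blast
      then have "insert b D = D" using mx by blast
      then show False using b by blast
    qed
  qed
  have "\<forall>g \<in> \<Gamma>. h g \<in> D10"
  proof
    fix g assume "g \<in> \<Gamma>"
    then have "g \<in> D" using D1 by blast
    moreover have "h g \<in> B10" using valid unfolding valuation_def by blast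
    ultimately show "h g \<in> D10" unfolding D10_def h_def by simp
  qed
  then have "h \<alpha> \<in> D10" using assms valid unfolding M11_consequence_def by blast
  moreover have "\<alpha> \<notin> D" using D2 hypD by blast
  ultimately show False unfolding D10_def h_def by simp
qed

end
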